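(* Let $t\in\mathbb{R}$ and $u\in\mathbb{R}\setminus\{0,1\}$. Then $\mathfrak{g}_{t,u}\in\mathcal{P}^s_{4,4}$ if and only if $V_F(t,\omega(u))\ge0$. Moreover $-\mathfrak{g}_{t,u}\notin\mathcal{P}^s_{4,4}$.
   Context: Variables $a,b,c,d$. Put $s_0=a^4+b^4+c^4+d^4-4abcd$; $s_1=T_{3,1}-12abcd$ with $T_{3,1}=\sum_{i\ne j}x_i^3x_j$; $s_2=\sum_{i<j}x_i^2x_j^2-6abcd$; $s_3=T_{2,1,1}-12abcd$ with $T_{2,1,1}=\sum_i x_i^2\sum_{j<k,\ j,k\ne i}x_jx_k$; $s_4=abcd$ (here $(x_1,x_2,x_3,x_4)=(a,b,c,d)$). Let $\omega(u)=u+\frac1u-2$ and $p^G_0(t,w)=(4t+2)w^2-3(t-1)^2w$, $p^G_1(t,w)=-2(t+1)^2w^2+2(t+1)(t-1)^2w$, $p^G_2(t,w)=4t^2w^2-2(t-1)^2(2t-1)w+2(t-1)^4$, $p^G_3(t,w)=2(t+1)^2w^2-(t-1)^2(t^2+3)w-2(t-1)^4$, $p^G_4(t,w)=2(t-1)^4w^2$, and for $u\ne0$, $\mathfrak{g}_{t,u}=u^2\sum_{i=0}^4p^G_i(t,\omega(u))s_i$. Let $V_F(t,w)=(3+6t-t^2)w^2-6(t-1)^2w$. $\mathcal{P}^s_{4,4}$ is the cone of symmetric real quartic forms in $a,b,c,d$ that are nonnegative on $\mathbb{R}^4$. *)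

theory Defs
  imports "HOL-Analysis.Analysis" "HOL-Combinatorics.Permutations"
begin

type_synonym form4 = "real \<Rightarrow> real \<Rightarrow> real \<Rightarrow> real \<Rightarrow> real"

definition s0 :: form4 where
  "s0 a b c d = a^4 + b^4 + c^4 + d^4 - 4*a*b*c*d"

definition T31 :: form4 where
  "T31 a b c d = a^3*(b+c+d) + b^3*(a+c+d) + c^3*(a+b+d) + d^3*(a+b+c)"

definition s1 :: form4 where
  "s1 a b c d = T31 a b c d - 12*a*b*c*d"

definition s2 :: form4 where
  "s2 a b c d = a^2*b^2 + a^2*c^2 + a^2*d^2 + b^2*c^2 + b^2*d^2 + c^2*d^2 - 6*a*b*c*d"

definition T211 :: form4 where
  "T211 a b c d = a^2*(b*c + b*d + c*d) + b^2*(a*c + a*d + c*d)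
                + c^2*(a*b + a*d + b*d) + d^2*(a*b + a*c + b*c)"

definition s3 :: form4 where
  "s3 a b c d = T211 a b c d - 12*a*b*c*d"

definition s4 :: form4 where
  "s4 a b c d = a*b*c*d"

definition omega :: "real \<Rightarrow> real" where
  "omega u = u + 1/u - 2"

definition pG0 :: "real \<Rightarrow> real \<Rightarrow> real" where
  "pG0 t w = (4*t+2)*w^2 - 3*(t-1)^2*w"
definition pG1 :: "real \<Rightarrow> real \<Rightarrow> real" where
  "pG1 t w = -2*(t+1)^2*w^2 + 2*(t+1)*(t-1)^2*w"
definition pG2 :: "real \<Rightarrow> real \<Rightarrow> real" where
  "pG2 t w = 4*t^2*w^2 - 2*(t-1)^2*(2*t-1)*w + 2*(t-1)^4"
definition pG3 :: "real \<Rightarrow> real \<Rightarrow> real" where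
  "pG3 t w = 2*(t+1)^2*w^2 - (t-1)^2*(t^2+3)*w - 2*(t-1)^4"
definition pG4 :: "real \<Rightarrow> real \<Rightarrow> real" where
  "pG4 t w = 2*(t-1)^4*w^2"

definition gfrak :: "real \<Rightarrow> real \<Rightarrow> form4" where
  "gfrak t u a b c d = u^2 * (pG0 t (omega u) * s0 a b c d + pG1 t (omega u) * s1 a b c d
      + pG2 t (omega u) * s2 a b c d + pG3 t (omega u) * s3 a b c d + pG4 t (omega u) * s4 a b c d)"

definition VF :: "real \<Rightarrow> real \<Rightarrow> real" where
  "VF t w = (3 + 6*t - t^2)*w^2 - 6*(t-1)^2*w"

definition quartic_form :: "form4 \<Rightarrow> bool" where
  "quartic_form f \<longleftrightarrow> (\<exists>coef :: nat \<Rightarrow> nat \<Rightarrow> nat \<Rightarrow> nat \<Rightarrow> real.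
     \<forall>a b c d. f a b c d =
       (\<Sum>(i,j,k,l) \<in> {(i,j,k,l). i + j + k + l = 4}. coef i j k l * a^i * b^j * c^k * d^l))"

definition symmetric_form :: "form4 \<Rightarrow> bool" where
  "symmetric_form f \<longleftrightarrow> (\<forall>\<sigma> x. \<sigma> permutes {0::nat..<4} \<longrightarrow>
     f (x (\<sigma> 0)) (x (\<sigma> 1)) (x (\<sigma> 2)) (x (\<sigma> 3)) = f (x 0) (x 1) (x 2) (x 3))"

definition Ps44 :: "form4 set" where
  "Ps44 = {f. quartic_form f \<and> symmetric_form f \<and> (\<forall>a b c d. f a b c d \<ge> 0)}"

end

theory Submission imports Defs begin

lemma s0_mpqr: "s0 (m+p+q+r) (m+p-q-r) (m-p+q-r) (m-p-q+r) = 32*m^2*(p^2+q^2+r^2) + 64*m*(p*q*r) + 32*(p^2*q^2+q^2*r^2+r^2*p^2)"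
  unfolding s0_def by algebra
lemma s1_mpqr: "s1 (m+p+q+r) (m+p-q-r) (m-p+q-r) (m-p-q+r) = 48*m^2*(p^2+q^2+r^2) - 96*m*(p*q*r) - 16*(p^2+q^2+r^2)^2 + 32*(p^2*q^2+q^2*r^2+r^2*p^2)"
  unfolding s1_def T31_def by algebra
lemma s2_mpqr: "s2 (m+p+q+r) (m+p-q-r) (m-p+q-r) (m-p-q+r) = 16*m^2*(p^2+q^2+r^2) - 96*m*(p*q*r) + 16*(p^2*q^2+q^2*r^2+r^2*p^2)"
  unfolding s2_def by algebra
lemma s3_mpqr: "s3 (m+p+q+r) (m+p-q-r) (m-p+q-r) (m-p-q+r) = 16*m^2*(p^2+q^2+r^2) - 96*m*(p*q*r) - 16*(p^2+q^2+r^2)^2 + 64*(p^2*q^2+q^2*r^2+r^2*p^2)"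
  unfolding s3_def T211_def by algebra
lemma s4_mpqr: "s4 (m+p+q+r) (m+p-q-r) (m-p+q-r) (m-p-q+r) = m^4 - 2*m^2*(p^2+q^2+r^2) + 8*m*(p*q*r) + (p^2+q^2+r^2)^2 - 4*(p^2*q^2+q^2*r^2+r^2*p^2)"
  unfolding s4_def by algebra

definition Aq :: "real \<Rightarrow> real \<Rightarrow> real" where "Aq t w = w*(6*w-3*(t-1)^2)"
definition Bq :: "real \<Rightarrow> real \<Rightarrow> real" where "Bq t w = 2*t^2*w^2 + 6*t^2*w - 8*t*w^2 - 12*t*w - 6*w^2 + 6*w"
definition Cq :: "real \<Rightarrow> real \<Rightarrow> real" where "Cq t w = w*(2*w*(2*t+1)-3*(t-1)^2)"
definition Rq :: "real \<Rightarrow> real \<Rightarrow> real \<Rightarrow> real \<Rightarrow> real" where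
  "Rq t w x y = Aq t w * x^2 + Bq t w * x * y + Cq t w * y^2"
definition Gp :: "real \<Rightarrow> real \<Rightarrow> form4" where
  "Gp t w a b c d = pG0 t w * s0 a b c d + pG1 t w * s1 a b c d + pG2 t w * s2 a b c d + pG3 t w * s3 a b c d + pG4 t w * s4 a b c d"

lemma G3: "Gp t w y y y x = (t*y - x)^2 * Rq t w y x"
  unfolding Gp_def Rq_def Aq_def Bq_def Cq_def s0_def s1_def s2_def s3_def s4_def T31_def T211_def pG0_def pG1_def pG2_def pG3_def pG4_def
  by algebra

definition cH0 :: "real \<Rightarrow> real \<Rightarrow> real" where "cH0 t w = pG4 t w"
definition cHa :: "real \<Rightarrow> real \<Rightarrow> real" where "cHa t w = 32*pG0 t w + 48*pG1 t w + 16*pG2 t w + 16*pG3 t w - 2*pG4 t w"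
definition cHb :: "real \<Rightarrow> real \<Rightarrow> real" where "cHb t w = 64*pG0 t w - 96*pG1 t w - 96*pG2 t w - 96*pG3 t w + 8*pG4 t w"
definition cHg :: "real \<Rightarrow> real \<Rightarrow> real" where "cHg t w = -16*pG1 t w - 16*pG3 t w + pG4 t w"
definition cHd :: "real \<Rightarrow> real \<Rightarrow> real" where "cHd t w = 32*pG0 t w + 32*pG1 t w + 16*pG2 t w + 64*pG3 t w - 4*pG4 t w"
definition H :: "real \<Rightarrow> real \<Rightarrow> real \<Rightarrow> real \<Rightarrow> real \<Rightarrow> real \<Rightarrow> real" where
  "H t w m S P E = cH0 t w*m^4 + cHa t w*m^2*S + cHb t w*m*P + cHg t w*S^2 + cHd t w*E"

lemma Gp_H: "Gp t w (m+p+q+r) (m+p-q-r) (m-p+q-r) (m-p-q+r) = H t w m (p^2+q^2+r^2) (p*q*r) (p^2*q^2+q^2*r^2+r^2*p^2)"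
  unfolding Gp_def s0_mpqr s1_mpqr s2_mpqr s3_mpqr s4_mpqr H_def cH0_def cHa_def cHb_def cHg_def cHd_def
  by (simp add: algebra_simps)

lemma H_A0: "H t w m S 0 0 = 2*(t-1)^4*((w+4)*S - w*m^2)^2"
  unfolding H_def cH0_def cHa_def cHg_def pG0_def pG1_def pG2_def pG3_def pG4_def by algebra

lemma Gsym: "Gp t w x y y y = Gp t w y y y x"
  unfolding Gp_def s0_def s1_def s2_def s3_def s4_def T31_def T211_def by (simp add: algebra_simps)

lemma H_Apm: "H t w m (3*k^2) (k^3) (3*k^4) = (t*(m-k) - (m+3*k))^2 * Rq t w (m-k) (m+3*k)"
proof -
  have e: "k^2+k^2+k^2 = 3*k^2" "k*k*k = k^3" "k^2*k^2+k^2*k^2+k^2*k^2 = 3*k^4"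
    by (simp_all add: power2_eq_square power3_eq_cube power4_eq_xxxx)
  have "H t w m (3*k^2) (k^3) (3*k^4) = Gp t w (m+k+k+k) (m+k-k-k) (m-k+k-k) (m-k-k+k)"
    unfolding Gp_H e ..
  also have "\<dots> = Gp t w (m+3*k) (m-k) (m-k) (m-k)" by (simp add: algebra_simps)
  also have "\<dots> = (t*(m-k) - (m+3*k))^2 * Rq t w (m-k) (m+3*k)" by (simp add: Gsym G3)
  finally show ?thesis .
qed

lemma conv_id:
  fixes c0 ca cb cg cd m k P E :: real
  defines "h \<equiv> \<lambda>S P E. c0*m^4 + ca*m^2*S + cb*m*P + cg*S^2 + cd*E"
  shows "(9*k^4)*k^3 * h (3*k^2) P E = (9*k^4 - 3*E)*k^3 * h (3*k^2) 0 0
     + ((3*E*k^3 + 9*k^4*P)/2) * h (3*k^2) (k^3) (3*k^4)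
     + ((3*E*k^3 - 9*k^4*P)/2) * h (3*k^2) (-(k^3)) (3*k^4)"
  unfolding h_def by (simp add: field_simps)

lemma VF_D: "Bq t w ^2 - 4*Aq t w * Cq t w = -4*w^2*(t-1)^2*VF t w"
  unfolding Aq_def Bq_def Cq_def VF_def by algebra

lemma R_idA: "4*Aq t w * Rq t w x y = (2*Aq t w*x + Bq t w*y)^2 - (Bq t w ^2 - 4*Aq t w * Cq t w)*y^2"
  unfolding Rq_def by algebra
lemma R_idC: "4*Cq t w * Rq t w x y = (2*Cq t w*y + Bq t w*x)^2 - (Bq t w ^2 - 4*Aq t w * Cq t w)*x^2"
  unfolding Rq_def by algebra
lemma C_VF: "2*Cq t w = VF t w + (t+1)^2*w^2"
  unfolding Cq_def VF_def by algebra

lemma Rq_nonneg: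
  assumes w: "w \<noteq> 0" and V: "VF t w \<ge> 0"
  shows "Rq t w x y \<ge> 0"
proof -
  have D: "Bq t w ^2 - 4*Aq t w * Cq t w \<le> 0"
    unfolding VF_D using V by (simp add: mult_nonneg_nonneg)
  show ?thesis
  proof (cases "w < 0")
    case True
    have "6*w-3*(t-1)^2 < 0" using True by (smt (verit) zero_le_power2)
    hence A: "Aq t w > 0" unfolding Aq_def using True by (simp add: mult_neg_neg)
    have "4*Aq t w * Rq t w x y \<ge> 0" unfolding R_idA using D
      by (smt (verit) mult_nonpos_nonneg zero_le_power2)
    thus ?thesis using A by (simp add: zero_le_mult_iff)
  next
    case False
    hence wp: "w > 0" using w by simp
    have "Cq t w > 0"
    proof (cases "t = -1")
      case True
      have "VF t w = -4*w^2 - 24*w" unfolding VF_def True by (simp add: power2_eq_square)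
      hence False using V wp by (smt (verit) zero_le_power2)
      thus ?thesis ..
    next
      case False
      hence "(t+1)^2*w^2 > 0" using w by simp
      thus ?thesis using C_VF[of t w] V by linarith
    qed
    moreover have "4*Cq t w * Rq t w x y \<ge> 0" unfolding R_idC using D
      by (smt (verit) mult_nonpos_nonneg zero_le_power2)
    ultimately show ?thesis by (simp add: zero_le_mult_iff)
  qed
qed


lemma H_nonneg:
  assumes R: "\<And>x y. Rq t w x y \<ge> 0"
  shows "H t w m (p^2+q^2+r^2) (p*q*r) (p^2*q^2+q^2*r^2+r^2*p^2) \<ge> 0"
proof -
  define S where "S = p^2+q^2+r^2"
  define P where "P = p*q*r"
  define E where "E = p^2*q^2+q^2*r^2+r^2*p^2"
  have E0: "E \<ge> 0" unfolding E_def by simp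
  have SE: "S^2 - 3*E \<ge> 0"
  proof -
    have "S^2 - 3*E = ((p^2-q^2)^2 + (q^2-r^2)^2 + (r^2-p^2)^2)/2"
      unfolding S_def E_def by (simp add: field_simps) algebra
    moreover have "0 \<le> ((p^2-q^2)^2 + (q^2-r^2)^2 + (r^2-p^2)^2)/2" by simp
    ultimately show ?thesis by linarith
  qed
  have EP: "E^2 - 3*P^2*S \<ge> 0"
  proof -
    have "E^2 - 3*P^2*S = ((p^2*q^2-q^2*r^2)^2 + (q^2*r^2-r^2*p^2)^2 + (r^2*p^2-p^2*q^2)^2)/2"
      unfolding S_def E_def P_def by (simp add: field_simps) algebra
    moreover have "0 \<le> ((p^2*q^2-q^2*r^2)^2 + (q^2*r^2-r^2*p^2)^2 + (r^2*p^2-p^2*q^2)^2)/2" by simp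
    ultimately show ?thesis by linarith
  qed
  show ?thesis
  proof (cases "S = 0")
    case True
    hence "p = 0" "q = 0" "r = 0" unfolding S_def by (smt (verit) zero_le_power2 zero_eq_power2)+
    thus ?thesis using H_A0[of t w m 0] by simp
  next
    case False
    hence Sp: "S > 0" unfolding S_def by (smt (verit) zero_le_power2)
    define k where "k = sqrt (S/3)"
    have kp: "k > 0" unfolding k_def using Sp by simp
    have Sk: "S = 3*k^2" unfolding k_def using Sp by simp
    have A0: "H t w m (3*k^2) 0 0 \<ge> 0" using H_A0 by simp
    have Ap: "H t w m (3*k^2) (k^3) (3*k^4) \<ge> 0" unfolding H_Apm using R by simp
    have Am: "H t w m (3*k^2) (-(k^3)) (3*k^4) \<ge> 0" using H_Apm[of t w m "-k"] R by simp
    have c1: "9*k^4 - 3*E \<ge> 0" using SE unfolding Sk by (simp add: power_mult_distrib)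
    have "(3*k*P)^2 \<le> E^2" using EP unfolding Sk by (simp add: power_mult_distrib mult.commute mult.left_commute)
    hence "\<bar>3*k*P\<bar> \<le> E" using E0 power2_le_imp_le[of "\<bar>3*k*P\<bar>" E] by simp
    hence c2: "3*E*k^3 + 9*k^4*P \<ge> 0" and c3: "3*E*k^3 - 9*k^4*P \<ge> 0"
    proof -
      assume h: "\<bar>3*k*P\<bar> \<le> E"
      have "3*E*k^3 + 9*k^4*P = 3*k^3*(E + 3*k*P)" "3*E*k^3 - 9*k^4*P = 3*k^3*(E - 3*k*P)"
        by (simp_all add: algebra_simps power4_eq_xxxx power3_eq_cube)
      moreover have "E + 3*k*P \<ge> 0" "E - 3*k*P \<ge> 0" using h by linarith+
      ultimately show "3*E*k^3 + 9*k^4*P \<ge> 0" "3*E*k^3 - 9*k^4*P \<ge> 0" using kp by simp_all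
    qed
    have id: "(9*k^4)*k^3 * H t w m (3*k^2) P E = (9*k^4 - 3*E)*k^3 * H t w m (3*k^2) 0 0
     + ((3*E*k^3 + 9*k^4*P)/2) * H t w m (3*k^2) (k^3) (3*k^4)
     + ((3*E*k^3 - 9*k^4*P)/2) * H t w m (3*k^2) (-(k^3)) (3*k^4)"
      unfolding H_def by (rule conv_id)
    have "(9*k^4)*k^3 * H t w m (3*k^2) P E \<ge> 0"
      unfolding id using A0 Ap Am c1 c2 c3 kp by (intro add_nonneg_nonneg mult_nonneg_nonneg) auto
    hence "H t w m (3*k^2) P E \<ge> 0" using kp by (simp add: zero_le_mult_iff)
    thus ?thesis unfolding S_def[symmetric] P_def[symmetric] E_def[symmetric] Sk .
  qed
qed

lemma Gp_nonneg:
  assumes R: "\<And>x y. Rq t w x y \<ge> 0"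
  shows "Gp t w a b c d \<ge> 0"
proof -
  define m where "m = (a+b+c+d)/4"
  define p where "p = (a+b-c-d)/4"
  define q where "q = (a-b+c-d)/4"
  define r where "r = (a-b-c+d)/4"
  have "Gp t w a b c d = Gp t w (m+p+q+r) (m+p-q-r) (m-p+q-r) (m-p-q+r)"
    unfolding m_def p_def q_def r_def by (simp add: field_simps)
  thus ?thesis unfolding Gp_H using H_nonneg[OF R] by simp
qed


lemma R_neg:
  assumes D: "Bq t w ^2 - 4*Aq t w * Cq t w > 0"
  shows "\<exists>x y. Rq t w x y < 0"
proof -
  consider "Aq t w > 0" | "Aq t w < 0" | "Aq t w = 0" by linarith
  thus ?thesis
  proof cases
    case 1
    have "4*Aq t w * Rq t w (- Bq t w) (2*Aq t w) = - (Bq t w ^2 - 4*Aq t w * Cq t w) * (2*Aq t w)^2"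
      unfolding R_idA by (simp add: algebra_simps)
    also have "\<dots> < 0" using 1 D by (intro mult_neg_pos) auto
    finally have "Rq t w (- Bq t w) (2*Aq t w) < 0" using 1 by (simp add: mult_less_0_iff)
    thus ?thesis by blast
  next
    case 2
    have "Rq t w 1 0 < 0" unfolding Rq_def using 2 by simp
    thus ?thesis by blast
  next
    case 3
    hence "Bq t w \<noteq> 0" using D by auto
    hence "Rq t w (-(Cq t w + 1)/Bq t w) 1 = -1" unfolding Rq_def using 3 by (simp add: field_simps)
    thus ?thesis by (metis neg_less_0_iff_less zero_less_one)
  qed
qed

lemma R_neg2:
  assumes R0: "Rq t w x0 y0 < 0" and t1: "t \<noteq> 1"
  shows "\<exists>x y. Rq t w x y < 0 \<and> t*x \<noteq> y"
proof (cases "t*x0 = y0")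
  case False thus ?thesis using R0 by blast
next
  case True
  define L where "L = 2*Aq t w*x0 + Bq t w*(x0+y0) + 2*Cq t w*y0"
  define K where "K = Aq t w + Bq t w + Cq t w"
  define \<delta> where "\<delta> = - Rq t w x0 y0"
  define M where "M = \<bar>L\<bar> + \<bar>K\<bar>"
  define e where "e = \<delta> / (M + \<delta>)"
  have dp: "\<delta> > 0" using R0 unfolding \<delta>_def by simp
  have M0: "M \<ge> 0" unfolding M_def by simp
  have ep: "e > 0" unfolding e_def using dp M0 by simp
  have e1: "e \<le> 1" unfolding e_def using dp M0 by simp
  have eM: "e*M < \<delta>"
  proof -
    have "e*M = \<delta>*M/(M+\<delta>)" unfolding e_def by simp
    also have "\<dots> < \<delta>" using dp M0 by (simp add: field_simps)
    finally show ?thesis .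
  qed
  have exp: "Rq t w (x0+e) (y0+e) = Rq t w x0 y0 + e*L + e^2*K"
    unfolding Rq_def L_def K_def by (simp add: algebra_simps power2_eq_square)
  have "e*L \<le> e*\<bar>L\<bar>" using ep by (simp add: mult_left_mono)
  moreover have "e^2*K \<le> e*\<bar>K\<bar>"
  proof -
    have "e^2*K \<le> e^2*\<bar>K\<bar>" by (simp add: mult_left_mono)
    also have "\<dots> \<le> e*\<bar>K\<bar>" using ep e1 by (simp add: power2_eq_square mult_right_mono)
    finally show ?thesis .
  qed
  ultimately have "Rq t w (x0+e) (y0+e) < 0" unfolding exp using eM unfolding M_def \<delta>_def
    by (simp add: algebra_simps)
  moreover have "t*(x0+e) \<noteq> y0+e"
  proof
    assume "t*(x0+e) = y0+e"
    hence "(t-1)*e = 0" using True by (simp add: algebra_simps)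
    thus False using t1 ep by simp
  qed
  ultimately show ?thesis by blast
qed

lemma Gp_neg:
  assumes w: "w \<noteq> 0" and V: "VF t w < 0"
  shows "\<exists>x y. Gp t w x x x y < 0"
proof -
  have t1: "t \<noteq> 1"
  proof
    assume "t = 1"
    hence "VF t w = 8*w^2" unfolding VF_def by simp
    thus False using V by (smt (verit) zero_le_power2)
  qed
  have "Bq t w ^2 - 4*Aq t w * Cq t w > 0" unfolding VF_D using V w t1
    by (simp add: mult_pos_neg mult_neg_neg)
  then obtain x0 y0 where "Rq t w x0 y0 < 0" using R_neg by blast
  then obtain x y where xy: "Rq t w x y < 0" "t*x \<noteq> y" using R_neg2 t1 by blast
  have "Gp t w x x x y = (t*x - y)^2 * Rq t w x y" by (rule G3)
  also have "\<dots> < 0" using xy by (simp add: mult_pos_neg)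
  finally show ?thesis by blast
qed


definition QS :: "(nat\<times>nat\<times>nat\<times>nat) set" where "QS = {(i,j,k,l). i + j + k + l = 4}"

lemma QS_fin: "finite {(i::nat,j::nat,k::nat,l::nat). i + j + k + l = 4}"
proof (rule finite_subset)
  show "{(i::nat,j::nat,k::nat,l::nat). i + j + k + l = 4} \<subseteq> {..4} \<times> {..4} \<times> {..4} \<times> {..4}" by auto
qed auto

lemma qf_add:
  assumes "quartic_form f" "quartic_form g"
  shows "quartic_form (\<lambda>a b c d. f a b c d + g a b c d)"
proof -
  obtain cf where cf: "\<forall>a b c d. f a b c d =
       (\<Sum>(i,j,k,l) \<in> {(i,j,k,l). i + j + k + l = 4}. cf i j k l * a^i * b^j * c^k * d^l)"
    using assms(1) unfolding quartic_form_def by blast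
  obtain cg where cg: "\<forall>a b c d. g a b c d =
       (\<Sum>(i,j,k,l) \<in> {(i,j,k,l). i + j + k + l = 4}. cg i j k l * a^i * b^j * c^k * d^l)"
    using assms(2) unfolding quartic_form_def by blast
  show ?thesis unfolding quartic_form_def
    apply (rule exI[of _ "\<lambda>i j k l. cf i j k l + cg i j k l"])
    apply (simp add: cf cg sum.distrib[symmetric] split_def distrib_right)
    done
qed

lemma qf_mono:
  assumes "i + j + k + l = 4"
  shows "quartic_form (\<lambda>a b c d. r * (a^i*b^j*c^k*d^l))"
  unfolding quartic_form_def
proof (intro exI allI)
  fix a b c d :: real
  let ?S = "{(i::nat,j::nat,k::nat,l::nat). i + j + k + l = 4}"
  have "(\<Sum>(i',j',k',l') \<in> ?S. (if (i',j',k',l') = (i,j,k,l) then r else 0) * a^i' * b^j' * c^k' * d^l')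
      = (\<Sum>x \<in> ?S. if x = (i,j,k,l) then r * a^i * b^j * c^k * d^l else 0)"
  proof (rule sum.cong[OF refl])
    fix x assume "x \<in> ?S"
    obtain i' j' k' l' where x: "x = (i',j',k',l')" by (cases x) auto
    show "(case x of (i',j',k',l') \<Rightarrow> (if (i',j',k',l') = (i,j,k,l) then r else 0) * a^i' * b^j' * c^k' * d^l')
      = (if x = (i,j,k,l) then r * a^i * b^j * c^k * d^l else 0)"
      unfolding x by (cases "(i',j',k',l') = (i,j,k,l)") auto
  qed
  also have "\<dots> = r * a^i * b^j * c^k * d^l" using QS_fin assms by simp
  finally show "r * (a^i*b^j*c^k*d^l) = (\<Sum>(i',j',k',l') \<in> ?S. (\<lambda>i' j' k' l'. if (i',j',k',l') = (i,j,k,l) then r else 0) i' j' k' l' * a^i' * b^j' * c^k' * d^l')"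
    by (simp add: mult.assoc)
qed

lemma qf_smult:
  assumes "quartic_form f"
  shows "quartic_form (\<lambda>a b c d. r * f a b c d)"
proof -
  obtain cf where cf: "\<forall>a b c d. f a b c d =
       (\<Sum>(i,j,k,l) \<in> {(i,j,k,l). i + j + k + l = 4}. cf i j k l * a^i * b^j * c^k * d^l)"
    using assms(1) unfolding quartic_form_def by blast
  show ?thesis unfolding quartic_form_def
    apply (rule exI[of _ "\<lambda>i j k l. r * cf i j k l"])
    apply (simp add: cf sum_distrib_left split_def mult.assoc)
    done
qed

lemma qf_s0: "quartic_form s0"
proof -
  have "quartic_form (\<lambda>a b c d. (1)*(a^0*b^0*c^0*d^4) + (1)*(a^0*b^0*c^4*d^0) + (1)*(a^0*b^4*c^0*d^0) + (1)*(a^4*b^0*c^0*d^0) + (-4)*(a^1*b^1*c^1*d^1))"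
    by (intro qf_add qf_mono) simp_all
  moreover have "(\<lambda>a b c d. (1)*(a^0*b^0*c^0*d^4) + (1)*(a^0*b^0*c^4*d^0) + (1)*(a^0*b^4*c^0*d^0) + (1)*(a^4*b^0*c^0*d^0) + (-4)*(a^1*b^1*c^1*d^1)) = s0"
    by (simp add: fun_eq_iff s0_def algebra_simps)
  ultimately show ?thesis by simp
qed

lemma qf_s1: "quartic_form s1"
proof -
  have "quartic_form (\<lambda>a b c d. (1)*(a^0*b^0*c^1*d^3) + (1)*(a^0*b^0*c^3*d^1) + (1)*(a^0*b^1*c^0*d^3) + (1)*(a^0*b^1*c^3*d^0) + (1)*(a^0*b^3*c^0*d^1) + (1)*(a^0*b^3*c^1*d^0) + (1)*(a^1*b^0*c^0*d^3) + (1)*(a^1*b^0*c^3*d^0) + (1)*(a^1*b^3*c^0*d^0) + (1)*(a^3*b^0*c^0*d^1) + (1)*(a^3*b^0*c^1*d^0) + (1)*(a^3*b^1*c^0*d^0) + (-12)*(a^1*b^1*c^1*d^1))"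
    by (intro qf_add qf_mono) simp_all
  moreover have "(\<lambda>a b c d. (1)*(a^0*b^0*c^1*d^3) + (1)*(a^0*b^0*c^3*d^1) + (1)*(a^0*b^1*c^0*d^3) + (1)*(a^0*b^1*c^3*d^0) + (1)*(a^0*b^3*c^0*d^1) + (1)*(a^0*b^3*c^1*d^0) + (1)*(a^1*b^0*c^0*d^3) + (1)*(a^1*b^0*c^3*d^0) + (1)*(a^1*b^3*c^0*d^0) + (1)*(a^3*b^0*c^0*d^1) + (1)*(a^3*b^0*c^1*d^0) + (1)*(a^3*b^1*c^0*d^0) + (-12)*(a^1*b^1*c^1*d^1)) = s1"
    by (simp add: fun_eq_iff s1_def T31_def algebra_simps)
  ultimately show ?thesis by simp
qed

lemma qf_s2: "quartic_form s2"
proof -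
  have "quartic_form (\<lambda>a b c d. (1)*(a^0*b^0*c^2*d^2) + (1)*(a^0*b^2*c^0*d^2) + (1)*(a^0*b^2*c^2*d^0) + (1)*(a^2*b^0*c^0*d^2) + (1)*(a^2*b^0*c^2*d^0) + (1)*(a^2*b^2*c^0*d^0) + (-6)*(a^1*b^1*c^1*d^1))"
    by (intro qf_add qf_mono) simp_all
  moreover have "(\<lambda>a b c d. (1)*(a^0*b^0*c^2*d^2) + (1)*(a^0*b^2*c^0*d^2) + (1)*(a^0*b^2*c^2*d^0) + (1)*(a^2*b^0*c^0*d^2) + (1)*(a^2*b^0*c^2*d^0) + (1)*(a^2*b^2*c^0*d^0) + (-6)*(a^1*b^1*c^1*d^1)) = s2"
    by (simp add: fun_eq_iff s2_def algebra_simps)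
  ultimately show ?thesis by simp
qed

lemma qf_s3: "quartic_form s3"
proof -
  have "quartic_form (\<lambda>a b c d. (1)*(a^0*b^1*c^1*d^2) + (1)*(a^0*b^1*c^2*d^1) + (1)*(a^0*b^2*c^1*d^1) + (1)*(a^1*b^0*c^1*d^2) + (1)*(a^1*b^0*c^2*d^1) + (1)*(a^1*b^1*c^0*d^2) + (1)*(a^1*b^1*c^2*d^0) + (1)*(a^1*b^2*c^0*d^1) + (1)*(a^1*b^2*c^1*d^0) + (1)*(a^2*b^0*c^1*d^1) + (1)*(a^2*b^1*c^0*d^1) + (1)*(a^2*b^1*c^1*d^0) + (-12)*(a^1*b^1*c^1*d^1))"
    by (intro qf_add qf_mono) simp_all
  moreover have "(\<lambda>a b c d. (1)*(a^0*b^1*c^1*d^2) + (1)*(a^0*b^1*c^2*d^1) + (1)*(a^0*b^2*c^1*d^1) + (1)*(a^1*b^0*c^1*d^2) + (1)*(a^1*b^0*c^2*d^1) + (1)*(a^1*b^1*c^0*d^2) + (1)*(a^1*b^1*c^2*d^0) + (1)*(a^1*b^2*c^0*d^1) + (1)*(a^1*b^2*c^1*d^0) + (1)*(a^2*b^0*c^1*d^1) + (1)*(a^2*b^1*c^0*d^1) + (1)*(a^2*b^1*c^1*d^0) + (-12)*(a^1*b^1*c^1*d^1)) = s3"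
    by (simp add: fun_eq_iff s3_def T211_def algebra_simps)
  ultimately show ?thesis by simp
qed

lemma qf_s4: "quartic_form s4"
proof -
  have "quartic_form (\<lambda>a b c d. (1)*(a^1*b^1*c^1*d^1))"
    by (intro qf_add qf_mono) simp_all
  moreover have "(\<lambda>a b c d. (1)*(a^1*b^1*c^1*d^1)) = s4"
    by (simp add: fun_eq_iff s4_def algebra_simps)
  ultimately show ?thesis by simp
qed

lemma qf_gfrak: "quartic_form (gfrak t u)"
proof -
  have "quartic_form (\<lambda>a b c d. u^2 * (pG0 t (omega u) * s0 a b c d + pG1 t (omega u) * s1 a b c d
      + pG2 t (omega u) * s2 a b c d + pG3 t (omega u) * s3 a b c d + pG4 t (omega u) * s4 a b c d))"
    by (intro qf_smult qf_add qf_s0 qf_s1 qf_s2 qf_s3 qf_s4)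
  thus ?thesis unfolding gfrak_def[abs_def] .
qed

definition Fps :: "real \<Rightarrow> real \<Rightarrow> real \<Rightarrow> real \<Rightarrow> real \<Rightarrow> real \<Rightarrow> real \<Rightarrow> real" where
  "Fps t u p1 p2 p3 p4 e4 = u^2 * (pG0 t (omega u) * (p4 - 4*e4) + pG1 t (omega u) * (p3*p1 - p4 - 12*e4)
     + pG2 t (omega u) * ((p2^2 - p4)/2 - 6*e4) + pG3 t (omega u) * (p2*(p1^2-p2)/2 - p3*p1 + p4 - 12*e4)
     + pG4 t (omega u) * e4)"

lemma gfrak_ps: "gfrak t u a b c d = Fps t u (a+b+c+d) (a^2+b^2+c^2+d^2) (a^3+b^3+c^3+d^3) (a^4+b^4+c^4+d^4) (a*b*c*d)"
proof -
  have "s0 a b c d = (a^4+b^4+c^4+d^4) - 4*(a*b*c*d)" unfolding s0_def by simp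
  moreover have "s1 a b c d = (a^3+b^3+c^3+d^3)*(a+b+c+d) - (a^4+b^4+c^4+d^4) - 12*(a*b*c*d)"
    unfolding s1_def T31_def by algebra
  moreover have "s2 a b c d = ((a^2+b^2+c^2+d^2)^2 - (a^4+b^4+c^4+d^4))/2 - 6*(a*b*c*d)"
    unfolding s2_def by (simp add: field_simps) algebra
  moreover have "s3 a b c d = (a^2+b^2+c^2+d^2)*((a+b+c+d)^2-(a^2+b^2+c^2+d^2))/2 - (a^3+b^3+c^3+d^3)*(a+b+c+d) + (a^4+b^4+c^4+d^4) - 12*(a*b*c*d)"
    unfolding s3_def T211_def by (simp add: field_simps) algebra
  moreover have "s4 a b c d = a*b*c*d" unfolding s4_def ..
  ultimately show ?thesis unfolding gfrak_def Fps_def by simp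
qed

lemma sum4: "(\<Sum>i\<in>{0..<4::nat}. f i) = f 0 + f 1 + f 2 + (f 3 :: real)"
  by (simp add: eval_nat_numeral atLeast0LessThan lessThan_Suc add.assoc add.commute add.left_commute)
lemma prod4: "(\<Prod>i\<in>{0..<4::nat}. f i) = f 0 * f 1 * f 2 * (f 3 :: real)"
  by (simp add: eval_nat_numeral atLeast0LessThan lessThan_Suc mult.assoc mult.commute mult.left_commute)

lemma sym_gfrak: "symmetric_form (gfrak t u)"
  unfolding symmetric_form_def
proof (intro allI impI)
  fix \<sigma> :: "nat \<Rightarrow> nat" and x :: "nat \<Rightarrow> real"
  assume s: "\<sigma> permutes {0..<4}"
  have ps: "x (\<sigma> 0)^n + x (\<sigma> 1)^n + x (\<sigma> 2)^n + x (\<sigma> 3)^n = x 0^n + x 1^n + x 2^n + x 3^n" for n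
  proof -
    have "(\<Sum>i\<in>{0..<4::nat}. x i ^ n) = (\<Sum>i\<in>{0..<4::nat}. ((\<lambda>i. x i ^ n) \<circ> \<sigma>) i)"
      by (rule sum.permute[OF s])
    thus ?thesis unfolding sum4 by simp
  qed
  have pr: "x (\<sigma> 0) * x (\<sigma> 1) * x (\<sigma> 2) * x (\<sigma> 3) = x 0 * x 1 * x 2 * x 3"
  proof -
    have "(\<Prod>i\<in>{0..<4::nat}. x i) = (\<Prod>i\<in>{0..<4::nat}. (x \<circ> \<sigma>) i)"
      by (rule prod.permute[OF s])
    thus ?thesis unfolding prod4 by simp
  qed
  show "gfrak t u (x (\<sigma> 0)) (x (\<sigma> 1)) (x (\<sigma> 2)) (x (\<sigma> 3)) = gfrak t u (x 0) (x 1) (x 2) (x 3)"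
    unfolding gfrak_ps pr ps[of 2] ps[of 3] ps[of 4] using ps[of 1] by simp
qed


lemma gfrak_Gp: "gfrak t u a b c d = u^2 * Gp t (omega u) a b c d"
  unfolding gfrak_def Gp_def by simp

lemma omega_nz: assumes "u \<noteq> 0" "u \<noteq> 1" shows "omega u \<noteq> 0"
proof
  assume "omega u = 0"
  hence "u*u + 1 - 2*u = 0" using assms(1) unfolding omega_def by (simp add: field_simps)
  hence "(u-1)^2 = 0" by (simp add: power2_eq_square algebra_simps)
  thus False using assms(2) by simp
qed

lemma Gp_1111: "Gp t w 1 1 1 1 = 2*(t-1)^4*w^2"
  unfolding Gp_def s0_def s1_def s2_def s3_def s4_def T31_def T211_def pG4_def by simp
lemma Gp_1000: "Gp 1 w 1 0 0 0 = 6*w^2"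
  unfolding Gp_def s0_def s1_def s2_def s3_def s4_def T31_def T211_def pG0_def by simp

theorem theorem2p4:
  fixes t u :: real
  assumes "u \<noteq> 0" and "u \<noteq> 1"
  shows "(gfrak t u \<in> Ps44 \<longleftrightarrow> VF t (omega u) \<ge> 0)
         \<and> (\<lambda>a b c d. - gfrak t u a b c d) \<notin> Ps44"
proof -
  define w where "w = omega u"
  have w0: "w \<noteq> 0" unfolding w_def using omega_nz assms by simp
  have u2: "u^2 > 0" using assms by simp
  have part1: "gfrak t u \<in> Ps44 \<longleftrightarrow> VF t w \<ge> 0"
  proof
    assume "gfrak t u \<in> Ps44"
    hence nn: "\<And>a b c d. gfrak t u a b c d \<ge> 0" unfolding Ps44_def by blast
    show "VF t w \<ge> 0"
    proof (rule ccontr)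
      assume "\<not> VF t w \<ge> 0"
      then obtain x y where "Gp t w x x x y < 0" using Gp_neg[OF w0] by force
      hence "gfrak t u x x x y < 0" unfolding gfrak_Gp w_def[symmetric] using u2
        by (simp add: mult_pos_neg)
      thus False using nn[of x x x y] by simp
    qed
  next
    assume V: "VF t w \<ge> 0"
    have "\<And>a b c d. gfrak t u a b c d \<ge> 0" unfolding gfrak_Gp w_def[symmetric]
      using Gp_nonneg[OF Rq_nonneg[OF w0 V]] by simp
    thus "gfrak t u \<in> Ps44" unfolding Ps44_def using qf_gfrak sym_gfrak by blast
  qed
  have pos: "\<exists>a b c d. gfrak t u a b c d > 0"
  proof (cases "t = 1")
    case True
    have "gfrak t u 1 0 0 0 > 0" unfolding gfrak_Gp w_def[symmetric] True Gp_1000 using u2 w0 by simp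
    thus ?thesis by blast
  next
    case False
    have "gfrak t u 1 1 1 1 > 0" unfolding gfrak_Gp w_def[symmetric] Gp_1111 using u2 w0 False by simp
    thus ?thesis by blast
  qed
  have part2: "(\<lambda>a b c d. - gfrak t u a b c d) \<notin> Ps44"
  proof
    assume "(\<lambda>a b c d. - gfrak t u a b c d) \<in> Ps44"
    hence "\<And>a b c d. - gfrak t u a b c d \<ge> 0" unfolding Ps44_def by blast
    thus False using pos by (meson linorder_not_le neg_0_le_iff_le)
  qed
  show ?thesis using part1 part2 unfolding w_def by blast
qed

end
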